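(* Let $X=\mathbb T=\mathbb R/\mathbb Z=G/\Gamma$ with $G=\mathbb R$, $\Gamma=\mathbb Z$, let $\mu$ be Haar measure on $X$, let $\rho_t(v)=tv$ for $v\in\mathbb R$, $t\in\mathbb R$, and let $x_0\in X$. Then there exists a Borel probability measure $\nu$ on $\mathbb R$ such that the family of measures $(\mu_t)_{t\ge0}$, defined by $\int_Xf\,d\mu_t=\int_{\mathbb R}f(ty+x_0)\,d\nu(y)$ for $f\in C(X)$, is weakly equidistributed but not equidistributed on $(X,\mu)$.
   Context: A family $(\mu_t)_{t\ge0}$ of probability measures on $X$ is equidistributed if $\int f\,d\mu_t\to\int f\,d\mu$ as $t\to\infty$ for all $f\in C(X)$; it is weakly equidistributed if there is a set $A\subset[0,\infty)$ with $\lim_{T\to\infty}\lambda(A\cap[0,T])/T=1$ ($\lambda$ Lebesgue measure) such that $\int f\,d\mu_t\to\int f\,d\mu$ as $t\to\infty$ with $t\in A$, for all $f\in C(X)$. *)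

theory Defs
  imports "HOL-Probability.Probability"
begin

text \<open>Functions in C(X), X = R/Z, are represented as continuous 1-periodic
  real functions on R.\<close>
definition circle_fun :: "(real \<Rightarrow> real) \<Rightarrow> bool" where
  "circle_fun f \<longleftrightarrow> continuous_on UNIV f \<and> (\<forall>x. f (x + 1) = f x)"

definition haar_int :: "(real \<Rightarrow> real) \<Rightarrow> real" where
  "haar_int f = (LINT x:{0..1}|lborel. f x)"

text \<open>The integral of f against mu_t: the pushforward of nu under y |-> t y + x0 mod Z.\<close>
definition mu_int :: "real measure \<Rightarrow> real \<Rightarrow> real \<Rightarrow> (real \<Rightarrow> real) \<Rightarrow> real" where
  "mu_int \<nu> x0 t f = (\<integral>y. f (t * y + x0) \<partial>\<nu>)"

definition equidistributed :: "real measure \<Rightarrow> real \<Rightarrow> bool" where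
  "equidistributed \<nu> x0 \<longleftrightarrow>
     (\<forall>f. circle_fun f \<longrightarrow> ((\<lambda>t. mu_int \<nu> x0 t f) \<longlongrightarrow> haar_int f) at_top)"

definition weakly_equidistributed :: "real measure \<Rightarrow> real \<Rightarrow> bool" where
  "weakly_equidistributed \<nu> x0 \<longleftrightarrow>
     (\<exists>A. A \<subseteq> {0..} \<and> A \<in> sets lebesgue \<and>
        ((\<lambda>T. measure lebesgue (A \<inter> {0..T}) / T) \<longlongrightarrow> 1) at_top \<and>
        (\<forall>f. circle_fun f \<longrightarrow>
           ((\<lambda>t. mu_int \<nu> x0 t f) \<longlongrightarrow> haar_int f) (inf at_top (principal A))))"

end

theory Submission
  imports Defs
begin



lemma cos_int_0T:
  fixes c T :: real assumes "0 \<le> T"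
  shows "(LBINT t:{0..T}. cos (c * t)) = (if c = 0 then T else sin (c * T) / c)"
proof -
  have eq: "(LBINT t:{0..T}. cos (c*t)) = (LBINT t=ereal 0..ereal T. cos (c*t))"
    using assms by (rule interval_integral_Icc[symmetric])
  show ?thesis
  proof (cases "c = 0")
    case True
    have "(LBINT t=ereal 0..ereal T. cos (c*t)) = T - 0"
      using assms True
      by (intro interval_integral_FTC_finite continuous_intros)
         (auto intro!: derivative_eq_intros simp: has_real_derivative_iff_has_vector_derivative[symmetric])
    then show ?thesis using True eq by simp
  next
    case False
    have "(LBINT t=ereal 0..ereal T. cos (c * t)) = sin (c * T) / c - sin (c * 0) / c"
      using assms False
      by (intro interval_integral_FTC_finite continuous_intros)
         (auto intro!: derivative_eq_intros simp: has_real_derivative_iff_has_vector_derivative[symmetric])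
    then show ?thesis using False eq by simp
  qed
qed

lemma cos_int_0T_bound:
  fixes c T :: real assumes "0 < T"
  shows "\<bar>(LBINT t:{0..T}. cos (c * t)) / T\<bar> \<le> 1"
proof -
  have "\<bar>sin (c * T) / c\<bar> \<le> T" if "c \<noteq> 0"
    using abs_sin_x_le_abs_x[of "c*T"] that assms by (simp add: abs_mult divide_simps mult.commute)
  then show ?thesis using assms by (simp add: cos_int_0T)
qed

lemma cos_int_0T_lim:
  fixes c :: real assumes "c \<noteq> 0"
  shows "((\<lambda>T. (LBINT t:{0..T}. cos (c * t)) / T) \<longlongrightarrow> 0) at_top"
proof -
  have "((\<lambda>T. sin (c * T) / c / T) \<longlongrightarrow> 0) at_top"
  proof (rule tendsto_0_le[where K=1 and f="\<lambda>T. 1 / (\<bar>c\<bar> * T)"])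
    show "((\<lambda>T. 1 / (\<bar>c\<bar> * T)) \<longlongrightarrow> 0) at_top"
      using assms by real_asymp
    show "\<forall>\<^sub>F T in at_top. norm (sin (c * T) / c / T) \<le> norm (1 / (\<bar>c\<bar> * T)) * 1"
      using eventually_gt_at_top[of 0]
    proof eventually_elim
      case (elim T)
      have "\<bar>sin (c*T)\<bar> \<le> 1" by simp
      then show ?case using elim assms by (simp add: abs_mult divide_simps)
    qed
  qed
  moreover have "\<forall>\<^sub>F T in at_top. sin (c * T) / c / T = (LBINT t:{0..T}. cos (c * t)) / T"
    using eventually_ge_at_top[of 0] by eventually_elim (simp add: cos_int_0T assms)
  ultimately show ?thesis using tendsto_cong by fastforce
qed

lemma wiener:
  fixes \<nu> :: "real measure" and a :: real
  assumes P: "prob_space \<nu>" and S: "sets \<nu> = sets borel"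
    and atom: "\<And>y. measure \<nu> {y} = 0" and a: "a \<noteq> 0"
  shows "((\<lambda>T. (LBINT t:{0..T}. (\<integral>y. cos (a*t*y) \<partial>\<nu>)\<^sup>2 + (\<integral>y. sin (a*t*y) \<partial>\<nu>)\<^sup>2) / T) \<longlongrightarrow> 0) at_top"
proof -
  interpret \<nu>: prob_space \<nu> by fact
  interpret M: pair_prob_space \<nu> \<nu> by unfold_locales
  let ?M = "\<nu> \<Otimes>\<^sub>M \<nu>"
  have [measurable]: "(\<lambda>x. x) \<in> borel_measurable \<nu>"
    unfolding measurable_cong_sets[OF S refl] by simp
  have [measurable]: "fst \<in> borel_measurable ?M" "snd \<in> borel_measurable ?M" by measurable
  have spM: "space ?M = UNIV" by (simp add: space_pair_measure sets_eq_imp_space_eq[OF S])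
  define f where "f t p = cos (a * t * (fst p - snd p))" for t p
  have f_meas[measurable]: "(\<lambda>p. f t p) \<in> borel_measurable ?M" for t
    unfolding f_def by measurable
  have f_int: "integrable ?M (f t)" for t
    by (rule M.integrable_const_bound[where B=1]) (auto simp: f_def)
  have h_eq: "(\<integral>y. cos (a*t*y) \<partial>\<nu>)\<^sup>2 + (\<integral>y. sin (a*t*y) \<partial>\<nu>)\<^sup>2 = integral\<^sup>L ?M (f t)" for t
  proof -
    have [measurable]: "(\<lambda>y. cos (a*t*y)) \<in> borel_measurable \<nu>" "(\<lambda>y. sin (a*t*y)) \<in> borel_measurable \<nu>"
      by measurable
    have ic: "integrable \<nu> (\<lambda>y. cos (a*t*y))" and iS: "integrable \<nu> (\<lambda>y. sin (a*t*y))"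
      by (auto intro!: \<nu>.integrable_const_bound[where B=1])
    have "integral\<^sup>L ?M (f t) = (\<integral>y. \<integral>z. f t (y, z) \<partial>\<nu> \<partial>\<nu>)"
      using M.integral_fst'[OF f_int] by simp
    also have "\<dots> = (\<integral>y. cos (a*t*y) * (\<integral>z. cos (a*t*z) \<partial>\<nu>) + sin (a*t*y) * (\<integral>z. sin (a*t*z) \<partial>\<nu>) \<partial>\<nu>)"
    proof (rule Bochner_Integration.integral_cong[OF refl])
      fix y
      have "(\<integral>z. f t (y, z) \<partial>\<nu>) = (\<integral>z. cos (a*t*y) * cos (a*t*z) + sin (a*t*y) * sin (a*t*z) \<partial>\<nu>)"
        unfolding f_def by (simp add: right_diff_distrib cos_diff)
      also have "\<dots> = cos (a*t*y) * (\<integral>z. cos (a*t*z) \<partial>\<nu>) + sin (a*t*y) * (\<integral>z. sin (a*t*z) \<partial>\<nu>)"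
        using ic iS by simp
      finally show "(\<integral>z. f t (y, z) \<partial>\<nu>) = \<dots>" .
    qed
    also have "\<dots> = (\<integral>y. cos (a*t*y) \<partial>\<nu>)\<^sup>2 + (\<integral>y. sin (a*t*y) \<partial>\<nu>)\<^sup>2"
      using ic iS by (simp add: power2_eq_square)
    finally show ?thesis ..
  qed
  have fub: "(LBINT t:{0..T}. integral\<^sup>L ?M (f t)) = (\<integral>p. (LBINT t:{0..T}. f t p) \<partial>?M)" if T: "0 \<le> T" for T
  proof -
    interpret L: pair_sigma_finite lborel ?M by unfold_locales
    have "(LBINT t:{0..T}. integral\<^sup>L ?M (f t)) = (LBINT t. (\<integral>p. indicator {0..T} t * f t p \<partial>?M))"
      unfolding set_lebesgue_integral_def by simp
    also have "\<dots> = (\<integral>p. (LBINT t. indicator {0..T} t * f t p) \<partial>?M)"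
    proof (intro L.Fubini_integral[symmetric] integrableI_bounded_set[where B=1 and A="{0..T} \<times> space ?M"])
      show "emeasure (lborel \<Otimes>\<^sub>M ?M) ({0..T} \<times> space ?M) < \<infinity>"
        using T by (subst sigma_finite_measure.emeasure_pair_measure_Times[OF prob_space_imp_sigma_finite[OF M.prob_space_axioms]]) (simp_all add: M.emeasure_space_1)
      show "AE x\<in>{0..T} \<times> space ?M in lborel \<Otimes>\<^sub>M ?M. norm (case x of (t, p) \<Rightarrow> indicator {0..T} t * f t p) \<le> 1"
        by (intro AE_I2) (simp add: f_def indicator_def split: prod.split)
      show "{0..T} \<times> space ?M \<in> sets (lborel \<Otimes>\<^sub>M ?M)"
        by (intro pair_measureI) auto
      show "AE x in lborel \<Otimes>\<^sub>M ?M. x \<notin> {0..T} \<times> space ?M \<longrightarrow> (case x of (t, p) \<Rightarrow> indicator {0..T} t * f t p) = 0"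
        by (intro AE_I2) (auto simp: spM indicator_def)
    qed (simp add: f_def)
    also have "\<dots> = (\<integral>p. (LBINT t:{0..T}. f t p) \<partial>?M)"
      unfolding set_lebesgue_integral_def by simp
    finally show ?thesis .
  qed
  have diag: "AE p in ?M. fst p \<noteq> snd p"
  proof -
    have D: "{p\<in>space ?M. fst p = snd p} \<in> sets ?M" by measurable
    have "emeasure ?M {p\<in>space ?M. fst p = snd p} = (\<integral>\<^sup>+ y. emeasure \<nu> (Pair y -` {p\<in>space ?M. fst p = snd p}) \<partial>\<nu>)"
      using \<nu>.emeasure_pair_measure_alt[OF D] .
    also have "\<dots> = (\<integral>\<^sup>+ y. 0 \<partial>\<nu>)"
    proof (rule nn_integral_cong)
      fix y
      have "Pair y -` {p\<in>space ?M. fst p = snd p} = {y}" using spM by auto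
      moreover have "emeasure \<nu> {y} = 0"
        using atom[of y] \<nu>.emeasure_eq_measure by simp
      ultimately show "emeasure \<nu> (Pair y -` {p\<in>space ?M. fst p = snd p}) = 0" by simp
    qed
    finally have "emeasure ?M {p\<in>space ?M. fst p = snd p} = 0" by simp
    then show ?thesis using D by (intro AE_I[where N="{p\<in>space ?M. fst p = snd p}"]) auto
  qed
  have lim: "((\<lambda>T. \<integral>p. (LBINT t:{0..T}. f t p) / T \<partial>?M) \<longlongrightarrow> (\<integral>p. 0 \<partial>?M)) at_top"
  proof (rule integral_dominated_convergence_at_top[where w="\<lambda>_. 1"])
    show "(\<lambda>p. (LBINT t:{0..T}. f t p) / T) \<in> borel_measurable ?M" for T
      unfolding set_lebesgue_integral_def f_def by measurable
    show "AE p in ?M. ((\<lambda>T. (LBINT t:{0..T}. f t p) / T) \<longlongrightarrow> 0) at_top"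
      using diag
    proof eventually_elim
      case (elim p)
      then have "a * (fst p - snd p) \<noteq> 0" using a by simp
      from cos_int_0T_lim[OF this] show ?case unfolding f_def by (simp add: mult_ac)
    qed
    show "\<forall>\<^sub>F T in at_top. AE p in ?M. norm ((LBINT t:{0..T}. f t p) / T) \<le> 1"
      using eventually_gt_at_top[of 0]
    proof eventually_elim
      case (elim T)
      show ?case
      proof (intro AE_I2)
        fix p :: "real \<times> real"
        have "(LBINT t:{0..T}. f t p) = (LBINT t:{0..T}. cos ((a * (fst p - snd p)) * t))"
          unfolding f_def by (simp add: mult_ac)
        then show "norm ((LBINT t:{0..T}. f t p) / T) \<le> 1"
          using cos_int_0T_bound[OF elim, of "a * (fst p - snd p)"] by simp
      qed
    qed
  qed auto
  have ev: "\<forall>\<^sub>F T in at_top. (\<integral>p. (LBINT t:{0..T}. f t p) / T \<partial>?M) =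
      (LBINT t:{0..T}. (\<integral>y. cos (a*t*y) \<partial>\<nu>)\<^sup>2 + (\<integral>y. sin (a*t*y) \<partial>\<nu>)\<^sup>2) / T"
    using eventually_ge_at_top[of 0]
    by eventually_elim (simp add: h_eq fub)
  have lim': "((\<lambda>T. \<integral>p. (LBINT t:{0..T}. f t p) / T \<partial>?M) \<longlongrightarrow> 0) at_top"
    using lim by simp
  show ?thesis by (rule Lim_transform_eventually[OF lim' ev])
qed



lemma density_set:
  fixes H :: "real \<Rightarrow> real" and B :: real
  assumes Hm[measurable]: "H \<in> borel_measurable borel" and H0: "\<And>t. 0 \<le> H t" and HB: "\<And>t. H t \<le> B"
    and avg: "((\<lambda>T. (LBINT t:{0..T}. H t) / T) \<longlongrightarrow> 0) at_top"
  shows "\<exists>A. A \<subseteq> {0..} \<and> A \<in> sets borel \<and>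
     ((\<lambda>T. measure lborel (A \<inter> {0..T}) / T) \<longlongrightarrow> 1) at_top \<and>
     (H \<longlongrightarrow> 0) (inf at_top (principal A))"
proof -
  define a where "a T = (LBINT t:{0..T}. H t) / T" for T
  have B0: "0 \<le> B" using H0[of 0] HB[of 0] by simp
  have Hint: "set_integrable lborel {0..T} H" for T
    unfolding set_integrable_def
    by (rule integrableI_bounded_set[where A="{0..T}" and B=B])
       (auto simp: emeasure_lborel_Icc_eq H0 HB abs_of_nonneg indicator_def)
  have I0: "0 \<le> (LBINT t:{0..T}. H t)" for T
    unfolding set_lebesgue_integral_def by (intro Bochner_Integration.integral_nonneg) (auto simp: H0 indicator_def)
  have a0: "0 \<le> a T" for T
  proof (cases "0 \<le> T")
    case True then show ?thesis
      unfolding a_def using I0[of T] by simp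
  next
    case False then have "{0..T} = {}" by auto
    then show ?thesis unfolding a_def by (simp add: set_lebesgue_integral_def)
  qed
  have aB: "a T \<le> B" for T
  proof (cases "T > 0")
    case True
    have "(LBINT t:{0..T}. H t) \<le> (LBINT t:{0..T}. B)"
      using Hint by (intro set_integral_mono) (auto simp: HB set_integrable_def emeasure_lborel_Icc_eq intro!: disjI2 integrable_real_indicator)
    also have "\<dots> = B * T" using True by (simp add: set_lebesgue_integral_def mult.commute)
    finally show ?thesis using True unfolding a_def by (simp add: divide_simps)
  next
    case False
    then show ?thesis using B0 I0[of T] unfolding a_def by (smt (verit) divide_nonneg_nonpos)
  qed
  have bdd: "bdd_above (a ` S)" for S using aB by (auto intro!: bdd_aboveI)
  define b where "b T = (SUP s\<in>{T..}. a s)" for T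
  have ab: "a T \<le> b T" for T unfolding b_def by (rule cSUP_upper[OF _ bdd]) auto
  have b0: "0 \<le> b T" for T using ab[of T] a0[of T] by simp
  have b_anti: "b T' \<le> b T" if "T \<le> T'" for T T'
    unfolding b_def using that by (intro cSUP_subset_mono bdd) auto
  have avg': "(a \<longlongrightarrow> 0) at_top" using avg unfolding a_def[abs_def] .
  have b_lim: "(b \<longlongrightarrow> 0) at_top"
  proof (rule order_tendstoI)
    fix e :: real assume "e < 0" then show "\<forall>\<^sub>F T in at_top. e < b T"
      using b0 by (intro always_eventually allI) (auto intro: less_le_trans)
  next
    fix e :: real assume e: "0 < e"
    have "\<forall>\<^sub>F s in at_top. a s < e/2" using order_tendstoD(2)[OF avg', of "e/2"] e by simp
    then obtain T0 where T0: "\<And>s. s \<ge> T0 \<Longrightarrow> a s < e/2" by (auto simp: eventually_at_top_linorder)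
    have bT: "b T \<le> e/2" if "T \<ge> T0" for T unfolding b_def
      using that T0 by (intro cSUP_least) (auto intro: less_imp_le)
    show "\<forall>\<^sub>F T in at_top. b T < e"
      using eventually_ge_at_top[of T0] by eventually_elim (use e bT in fastforce)
  qed
  define d where "d t = sqrt (b t) + 1 / (max t 0 + 1)" for t
  have d_pos: "0 < d t" for t unfolding d_def using b0[of t]
    by (intro add_nonneg_pos) auto
  have d_anti: "d T \<le> d t" if "t \<le> T" for t T
    unfolding d_def using that b_anti[OF that]
    by (intro add_mono real_sqrt_le_mono) (auto simp: divide_simps)
  have sqrt_b_le: "b t / d t \<le> sqrt (b t)" for t
  proof (cases "b t = 0")
    case False
    then have "0 < sqrt (b t)" using b0[of t] by simp
    moreover have "sqrt (b t) \<le> d t" unfolding d_def by simp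
    ultimately have "b t / d t \<le> b t / sqrt (b t)"
      using b0[of t] d_pos[of t] by (intro divide_left_mono) auto
    also have "\<dots> = sqrt (b t)" using b0[of t] by (simp add: real_div_sqrt)
    finally show ?thesis .
  qed simp
  have d_lim: "(d \<longlongrightarrow> 0) at_top"
  proof -
    have "((\<lambda>t. sqrt (b t) + 1 / (max t 0 + 1)) \<longlongrightarrow> sqrt 0 + 0) at_top"
    proof (intro tendsto_add tendsto_real_sqrt b_lim)
      have "((\<lambda>t::real. 1 / (t + 1)) \<longlongrightarrow> 0) at_top" by real_asymp
      moreover have "\<forall>\<^sub>F t in at_top. (1::real) / (t + 1) = (1::real) / (max t 0 + 1)"
        by (rule eventually_mono[OF eventually_ge_at_top[of "0::real"]]) simp
      ultimately show "((\<lambda>t::real. 1 / (max t 0 + 1)) \<longlongrightarrow> 0) at_top"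
        by (rule Lim_transform_eventually)
    qed
    then show ?thesis unfolding d_def[abs_def] by simp
  qed
  have b_meas[measurable]: "b \<in> borel_measurable borel"
  proof -
    have "mono (\<lambda>t. - b t)" by (auto simp: mono_def b_anti)
    then have "(\<lambda>t. - b t) \<in> borel_measurable borel" by (rule borel_measurable_mono)
    then have "(\<lambda>t. - (- b t)) \<in> borel_measurable borel" by measurable
    then show ?thesis by simp
  qed
  have d_meas[measurable]: "d \<in> borel_measurable borel" unfolding d_def[abs_def] by measurable
  define A where "A = {t. 0 \<le> t \<and> H t \<le> d t}"
  have A_sets: "A \<in> sets borel"
  proof -
    have "{t\<in>space borel. 0 \<le> t \<and> H t \<le> d t} \<in> sets borel" by measurable
    then show ?thesis unfolding A_def by simp
  qed
  have lim_H: "(H \<longlongrightarrow> 0) (inf at_top (principal A))"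
  proof (rule tendsto_sandwich[where f="\<lambda>_. 0" and h=d])
    show "\<forall>\<^sub>F n in inf at_top (principal A). 0 \<le> H n" by (simp add: H0)
    show "\<forall>\<^sub>F n in inf at_top (principal A). H n \<le> d n"
        by (simp add: eventually_inf_principal A_def)
    show "(d \<longlongrightarrow> 0) (inf at_top (principal A))"
      by (rule tendsto_mono[OF inf_le1 d_lim])
  qed simp
  have meas_le: "measure lborel (A \<inter> {0..T}) \<le> T" if "0 \<le> T" for T
  proof -
    have "measure lborel (A \<inter> {0..T}) \<le> measure lborel {0..T}"
      using A_sets by (intro measure_mono_fmeasurable) (auto simp: fmeasurable_def emeasure_lborel_Icc_eq)
    then show ?thesis using that by simp
  qed
  have meas_ge: "T - T * sqrt (b T) \<le> measure lborel (A \<inter> {0..T})" if T: "0 < T" for T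
  proof -
    define Bad where "Bad = {x\<in>{0..T}. d T \<le> H x}"
    have Bad_sets: "Bad \<in> sets borel"
    proof -
      have "{x\<in>space borel. x \<in> {0..T} \<and> d T \<le> H x} \<in> sets borel" by measurable
      then show ?thesis unfolding Bad_def by simp
    qed
    have "emeasure lborel Bad \<le> (1 / d T) * (LBINT t:{0..T}. H t)"
      unfolding Bad_def using d_pos[of T]
      by (intro integral_Markov_inequality'[OF Hint]) (auto simp: H0)
    also have "\<dots> = T * (a T / d T)" unfolding a_def using T by simp
    finally have "measure lborel Bad \<le> T * (a T / d T)"
      using T d_pos[of T] a0[of T] by (simp add: measure_def enn2real_leI)
    also have "\<dots> \<le> T * (b T / d T)"
      using T d_pos[of T] ab[of T] by (intro mult_left_mono divide_right_mono) auto
    also have "\<dots> \<le> T * sqrt (b T)" using T sqrt_b_le[of T] by (intro mult_left_mono) auto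
    finally have bad: "measure lborel Bad \<le> T * sqrt (b T)" .
    have sub: "{0..T} \<subseteq> (A \<inter> {0..T}) \<union> Bad"
    proof
      fix x assume x: "x \<in> {0..T}"
      show "x \<in> (A \<inter> {0..T}) \<union> Bad"
      proof (cases "H x \<le> d x")
        case True then show ?thesis using x unfolding A_def by auto
      next
        case False
        then have "d T \<le> H x" using d_anti[of x T] x by auto
        then show ?thesis using x unfolding Bad_def by auto
      qed
    qed
    have "T = measure lborel {0..T}" using T by simp
    also have "\<dots> \<le> measure lborel ((A \<inter> {0..T}) \<union> Bad)"
    proof (rule measure_mono_fmeasurable[OF sub])
      have BT: "Bad \<subseteq> {0..T}" unfolding Bad_def by blast
      have fmT: "{0..T} \<in> fmeasurable lborel" by (simp add: fmeasurable_def emeasure_lborel_Icc_eq)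
      show "{0..T} \<in> sets lborel" by simp
      show "A \<inter> {0..T} \<union> Bad \<in> fmeasurable lborel"
        by (rule fmeasurableI2[OF fmT]) (use BT A_sets Bad_sets in auto)
    qed
    also have "\<dots> \<le> measure lborel (A \<inter> {0..T}) + measure lborel Bad"
      using A_sets Bad_sets by (intro measure_Un_le) auto
    finally show ?thesis using bad by simp
  qed
  have dens: "((\<lambda>T. measure lborel (A \<inter> {0..T}) / T) \<longlongrightarrow> 1) at_top"
  proof (rule tendsto_sandwich[where f="\<lambda>T. 1 - sqrt (b T)" and h="\<lambda>_. 1"])
    show "\<forall>\<^sub>F T in at_top. 1 - sqrt (b T) \<le> measure lborel (A \<inter> {0..T}) / T"
      using eventually_gt_at_top[of 0]
    proof eventually_elim
      case (elim T) then show ?case using meas_ge[OF elim] by (simp add: divide_simps algebra_simps)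
    qed
    show "\<forall>\<^sub>F T in at_top. measure lborel (A \<inter> {0..T}) / T \<le> 1"
      using eventually_gt_at_top[of 0]
    proof eventually_elim
      case (elim T) then show ?case using meas_le[of T] by (simp add: divide_simps)
    qed
    have "((\<lambda>T. 1 - sqrt (b T)) \<longlongrightarrow> 1 - sqrt 0) at_top"
      by (intro tendsto_intros b_lim)
    then show "((\<lambda>T. 1 - sqrt (b T)) \<longlongrightarrow> 1) at_top" by simp
  qed simp
  show ?thesis
    by (intro exI[of _ A] conjI A_sets dens lim_H) (auto simp: A_def)
qed


inductive tp :: "(real \<Rightarrow> real) \<Rightarrow> bool" where
  tp_const: "tp (\<lambda>u. c)"
| tp_cos: "tp (\<lambda>u. cos (2 * pi * real_of_int n * u))"
| tp_sin: "tp (\<lambda>u. sin (2 * pi * real_of_int n * u))"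
| tp_add: "tp f \<Longrightarrow> tp g \<Longrightarrow> tp (\<lambda>u. f u + g u)"
| tp_scale: "tp f \<Longrightarrow> tp (\<lambda>u. c * f u)"

lemma tp_cong: "tp f \<Longrightarrow> (\<And>u. f u = g u) \<Longrightarrow> tp g"
proof -
  assume "tp f" "\<And>u. f u = g u"
  then have "f = g" by auto
  with \<open>tp f\<close> show ?thesis by simp
qed

lemma tp_cos_mult:
  assumes "tp g" shows "tp (\<lambda>u. cos (2 * pi * real_of_int n * u) * g u)"
  using assms
proof induction
  case (tp_const c)
  show ?case by (rule tp_cong[OF tp.tp_scale[OF tp.tp_cos, of c n]]) simp
next
  case (tp_cos m)
  let ?A = "2 * pi * real_of_int n" and ?B = "2 * pi * real_of_int m"
  have "tp (\<lambda>u. (1/2) * cos (2 * pi * real_of_int (n - m) * u) + (1/2) * cos (2 * pi * real_of_int (n + m) * u))"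
    by (intro tp.tp_add tp.tp_scale tp.tp_cos)
  then show ?case
    by (rule tp_cong) (simp add: cos_add cos_diff algebra_simps)
next
  case (tp_sin m)
  have "tp (\<lambda>u. (1/2) * sin (2 * pi * real_of_int (n + m) * u) + (-1/2) * sin (2 * pi * real_of_int (n - m) * u))"
    by (intro tp.tp_add tp.tp_scale tp.tp_sin)
  then show ?case
    by (rule tp_cong) (simp add: sin_add sin_diff algebra_simps)
next
  case (tp_add f g)
  have "tp (\<lambda>u. cos (2 * pi * real_of_int n * u) * f u + cos (2 * pi * real_of_int n * u) * g u)"
    using tp_add.IH by (rule tp.tp_add)
  then show ?case by (rule tp_cong) (simp add: algebra_simps)
next
  case (tp_scale f c)
  have "tp (\<lambda>u. c * (cos (2 * pi * real_of_int n * u) * f u))"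
    using tp_scale.IH by (rule tp.tp_scale)
  then show ?case by (rule tp_cong) (simp add: algebra_simps)
qed

lemma tp_sin_mult:
  assumes "tp g" shows "tp (\<lambda>u. sin (2 * pi * real_of_int n * u) * g u)"
  using assms
proof induction
  case (tp_const c)
  show ?case by (rule tp_cong[OF tp.tp_scale[OF tp.tp_sin, of c n]]) simp
next
  case (tp_cos m)
  have "tp (\<lambda>u. (1/2) * sin (2 * pi * real_of_int (n + m) * u) + (1/2) * sin (2 * pi * real_of_int (n - m) * u))"
    by (intro tp.tp_add tp.tp_scale tp.tp_sin)
  then show ?case
    by (rule tp_cong) (simp add: sin_add sin_diff algebra_simps)
next
  case (tp_sin m)
  have "tp (\<lambda>u. (1/2) * cos (2 * pi * real_of_int (n - m) * u) + (-1/2) * cos (2 * pi * real_of_int (n + m) * u))"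
    by (intro tp.tp_add tp.tp_scale tp.tp_cos)
  then show ?case
    by (rule tp_cong) (simp add: cos_add cos_diff algebra_simps)
next
  case (tp_add f g)
  have "tp (\<lambda>u. sin (2 * pi * real_of_int n * u) * f u + sin (2 * pi * real_of_int n * u) * g u)"
    using tp_add.IH by (rule tp.tp_add)
  then show ?case by (rule tp_cong) (simp add: algebra_simps)
next
  case (tp_scale f c)
  have "tp (\<lambda>u. c * (sin (2 * pi * real_of_int n * u) * f u))"
    using tp_scale.IH by (rule tp.tp_scale)
  then show ?case by (rule tp_cong) (simp add: algebra_simps)
qed

lemma tp_mult:
  assumes "tp f" "tp g" shows "tp (\<lambda>u. f u * g u)"
  using assms
proof induction
  case (tp_const c)
  then show ?case by (rule tp_scale)
next
  case (tp_cos n) then show ?case by (rule tp_cos_mult)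
next
  case (tp_sin n) then show ?case by (rule tp_sin_mult)
next
  case (tp_add f1 f2)
  have "tp (\<lambda>u. f1 u * g u + f2 u * g u)"
    using tp_add.IH tp_add.prems by (intro tp.tp_add) auto
  then show ?case by (rule tp_cong) (simp add: algebra_simps)
next
  case (tp_scale f c)
  have "tp (\<lambda>u. c * (f u * g u))"
    using tp_scale.IH tp_scale.prems by (intro tp.tp_scale) auto
  then show ?case by (rule tp_cong) (simp add: algebra_simps)
qed

lemma tp_cont: "tp f \<Longrightarrow> continuous_on UNIV f"
  by (induction rule: tp.induct) (auto intro!: continuous_intros)

lemma tp_poly:
  assumes "real_polynomial_function P"
  shows "tp (\<lambda>u. P (cis (2 * pi * u)))"
  using assms
proof induction
  case (linear l)
  interpret l: bounded_linear l by fact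
  have tp1: "tp (\<lambda>u. l 1 * cos (2 * pi * real_of_int 1 * u) + l \<i> * sin (2 * pi * real_of_int 1 * u))"
    by (intro tp.tp_add tp.tp_scale tp.tp_cos tp.tp_sin)
  have eq: "l (cis x) = l 1 * cos x + l \<i> * sin x" for x
  proof -
    have "cis x = cos x *\<^sub>R 1 + sin x *\<^sub>R \<i>" by (simp add: complex_eq_iff)
    then have "l (cis x) = cos x *\<^sub>R l 1 + sin x *\<^sub>R l \<i>" by (simp add: l.add l.scaleR)
    then show ?thesis by simp
  qed
  show ?case by (rule tp_cong[OF tp1]) (simp add: eq)
next
  case (const c) then show ?case by (rule tp.tp_const)
next
  case (add f g) show ?case using add.IH by (rule tp.tp_add)
next
  case (mult f g) show ?case using mult.IH by (rule tp_mult)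
qed

lemma circle_fun_int:
  assumes "circle_fun f" shows "f (u + real_of_int k) = f u"
proof -
  have per: "f (x + 1) = f x" for x using assms by (simp add: circle_fun_def)
  have "f (u + real n) = f u" for u n
  proof (induction n)
    case (Suc n)
    have "f (u + real (Suc n)) = f ((u + real n) + 1)" by (simp add: algebra_simps)
    also have "\<dots> = f (u + real n)" by (rule per)
    finally show ?case using Suc by simp
  qed simp
  show ?thesis
  proof (cases "k \<ge> 0")
    case True then show ?thesis using \<open>\<And>u n. f (u + real n) = f u\<close>[of u "nat k"] by simp
  next
    case False
    have "f (u + real_of_int k + real (nat (-k))) = f (u + real_of_int k)"
      by (rule \<open>\<And>u n. f (u + real n) = f u\<close>)
    then show ?thesis using False by simp
  qed
qed

lemma circle_approx:
  assumes f: "circle_fun f" and e: "0 < e"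
  shows "\<exists>g. tp g \<and> (\<forall>u. \<bar>f u - g u\<bar> < e)"
proof -
  have fc: "continuous_on UNIV f" using f by (simp add: circle_fun_def)
  have fci: "isCont f x" for x using fc by (simp add: continuous_on_eq_continuous_at)
  define F where "F z = f (Arg z / (2 * pi))" for z
  define G where "G z = f (Arg (- z) / (2 * pi) + 1 / 2)" for z
  have FG: "F z = G z" if "z \<noteq> 0" for z
  proof -
    have "Arg (- z) / (2 * pi) + 1 / 2 = Arg z / (2 * pi) + real_of_int (if Arg z \<le> 0 then 1 else 0)"
      using Arg_minus[OF that] by (auto simp: field_simps)
    then show ?thesis unfolding F_def G_def using circle_fun_int[OF f] by simp
  qed
  have Fc: "continuous_on (sphere 0 1) F"
  proof (intro continuous_at_imp_continuous_on ballI)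
    fix z :: complex assume "z \<in> sphere 0 1"
    then have z0: "z \<noteq> 0" by auto
    show "isCont F z"
    proof (cases "z \<in> \<real>\<^sub>\<le>\<^sub>0")
      case False
      have "isCont (\<lambda>z. Arg z / (2 * pi)) z"
        by (intro continuous_intros continuous_at_Arg False) simp
      then show ?thesis unfolding F_def by (rule isCont_o2[OF _ fci])
    next
      case True
      then have mz: "- z \<notin> \<real>\<^sub>\<le>\<^sub>0" using z0 by (auto simp: nonpos_Reals_def complex_eq_iff)
      have "isCont (\<lambda>z. Arg (- z)) z"
        by (rule isCont_o2[where f=uminus and g=Arg, OF _ continuous_at_Arg[OF mz]]) (intro continuous_intros)
      then have "isCont (\<lambda>z. Arg (- z) / (2 * pi) + 1 / 2) z"
        by (intro continuous_intros) (use pi_gt_zero in auto)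
      then have "isCont G z" unfolding G_def by (rule isCont_o2[OF _ fci])
      moreover have "\<forall>\<^sub>F w in nhds z. F w = G w"
      proof -
        have "\<forall>\<^sub>F w in nhds z. w \<noteq> 0" using z0 by (intro t1_space_nhds)
        then show ?thesis by eventually_elim (rule FG)
      qed
      ultimately show ?thesis using isCont_cong by blast
    qed
  qed
  obtain P where P: "polynomial_function P" "\<And>z. z \<in> sphere 0 1 \<Longrightarrow> norm (F z - P z) < e"
    using Stone_Weierstrass_polynomial_function[OF compact_sphere Fc e] by blast
  have Pr: "real_polynomial_function P" using P(1) by (simp add: real_polynomial_function_eq)
  have FP: "F (cis (2 * pi * u)) = f u" for u
  proof -
    have "Arg (cis (2 * pi * u)) = normalize_angle (2 * pi * u)"
      using Arg_rcis'[of 1 "2 * pi * u"] by (simp add: cis_rcis_eq)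
    then have "Arg (cis (2 * pi * u)) / (2 * pi) = u + real_of_int (- \<lceil>2 * pi * u / (2 * pi) - 1 / 2\<rceil>)"
      by (simp add: normalize_angle_def field_simps)
    then show ?thesis unfolding F_def using circle_fun_int[OF f, of u "- \<lceil>2 * pi * u / (2 * pi) - 1 / 2\<rceil>"] by simp
  qed
  show ?thesis
  proof (intro exI[of _ "\<lambda>u. P (cis (2 * pi * u))"] conjI allI tp_poly Pr)
    fix u
    show "\<bar>f u - P (cis (2 * pi * u))\<bar> < e"
      using P(2)[of "cis (2 * pi * u)"] FP[of u] by simp
  qed
qed



definition clamp :: "real \<Rightarrow> real" where "clamp x = max 0 (min 1 x)"

definition phiterm :: "real \<Rightarrow> nat \<Rightarrow> real" where
  "phiterm x k = real_of_int \<lfloor>2 ^ k * clamp x\<rfloor> / 2 ^ ((k + 3)\<^sup>2)"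

definition phi :: "real \<Rightarrow> real" where "phi x = (\<Sum>k. phiterm x k)"

lemma clamp_01: "0 \<le> clamp x" "clamp x \<le> 1" by (auto simp: clamp_def)

lemma clamp_mono: "x \<le> y \<Longrightarrow> clamp x \<le> clamp y" by (auto simp: clamp_def)

lemma clamp_id: "x \<in> {0..1} \<Longrightarrow> clamp x = x" by (auto simp: clamp_def)

lemma exp_bound: "2 * k \<le> (k + 3::nat)\<^sup>2" by (simp add: power2_eq_square algebra_simps)

lemma phiterm_nonneg: "0 \<le> phiterm x k"
  unfolding phiterm_def using clamp_01[of x] by simp

lemma floor_le_pow: "real_of_int \<lfloor>2 ^ k * clamp x\<rfloor> \<le> 2 ^ k"
proof -
  have "2 ^ k * clamp x \<le> 2 ^ k" using clamp_01[of x] by simp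
  then show ?thesis by linarith
qed

lemma phiterm_le: "phiterm x k \<le> 2 ^ k / 2 ^ ((k + 3)\<^sup>2)"
  unfolding phiterm_def using floor_le_pow[of k x] by (simp add: divide_right_mono)

lemma phiterm_le_geom: "phiterm x k \<le> (1/2) ^ k"
proof -
  have "(2::real) ^ k / 2 ^ ((k + 3)\<^sup>2) \<le> 2 ^ k / 2 ^ (2 * k)"
    using exp_bound[of k] by (intro divide_left_mono power_increasing) auto
  also have "\<dots> = (1/2) ^ k" by (simp add: power_mult power_divide field_simps power2_eq_square[symmetric] power_mult_distrib[symmetric])
  finally show ?thesis using phiterm_le[of x k] by linarith
qed

lemma phiterm_summable: "summable (phiterm x)"
  by (rule summable_comparison_test[OF _ summable_geometric[of "1/2::real"]])
     (auto intro!: exI[of _ 0] simp: phiterm_nonneg phiterm_le_geom)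

lemma phi_mono: "x \<le> y \<Longrightarrow> phi x \<le> phi y"
  unfolding phi_def
  by (intro suminf_le phiterm_summable allI)
     (auto simp: phiterm_def intro!: divide_right_mono floor_mono mult_left_mono clamp_mono)

lemma phi_strict:
  assumes "0 \<le> x" "x < y" "y \<le> 1"
  shows "phi x < phi y"
proof -
  obtain k where k: "1 / (y - x) < 2 ^ k" using real_arch_pow[of 2 "1 / (y - x)"] by auto
  then have "1 \<le> 2 ^ k * (y - x)" using assms by (simp add: field_simps)
  then have "2 ^ k * x + 1 \<le> 2 ^ k * y" by (simp add: algebra_simps)
  then have "\<lfloor>2 ^ k * x\<rfloor> < \<lfloor>2 ^ k * y\<rfloor>" by linarith
  then have lt: "phiterm x k < phiterm y k"
    using assms by (simp add: phiterm_def clamp_id divide_strict_right_mono)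
  have "0 < (\<Sum>i. phiterm y i - phiterm x i)"
  proof (rule suminf_pos2)
    show "summable (\<lambda>i. phiterm y i - phiterm x i)" by (intro summable_diff phiterm_summable)
    show "0 \<le> phiterm y i - phiterm x i" for i
      using assms by (auto simp: phiterm_def intro!: divide_right_mono floor_mono mult_left_mono clamp_mono)
    show "0 < phiterm y k - phiterm x k" using lt by simp
  qed
  also have "\<dots> = phi y - phi x" unfolding phi_def by (intro suminf_diff[symmetric] phiterm_summable)
  finally show ?thesis by simp
qed

lemma phi_meas[measurable]: "phi \<in> borel_measurable borel"
  by (rule borel_measurable_mono) (auto simp: mono_def phi_mono)

lemma pow_div: "(2::real) ^ A / 2 ^ (A + m) = (1/2) ^ m"
  by (simp add: power_add power_one_over)

lemma phi_near_int:
  assumes x: "x \<in> {0..1}"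
  shows "\<exists>I::int. \<exists>r. 2 ^ ((j + 3)\<^sup>2) * phi x = real_of_int I + r \<and> 0 \<le> r \<and> r \<le> 1/16"
proof -
  define c where "c = (2::real) ^ ((j + 3)\<^sup>2)"
  define g where "g k = c * phiterm x k" for k
  have gs: "summable g" unfolding g_def by (intro summable_mult phiterm_summable)
  have "c * phi x = (\<Sum>k. g k)" unfolding phi_def g_def by (intro suminf_mult[symmetric] phiterm_summable)
  also have "\<dots> = (\<Sum>i. g (i + Suc j)) + sum g {..<Suc j}"
    by (rule suminf_split_initial_segment[OF gs])
  finally have split: "c * phi x = (\<Sum>i. g (i + Suc j)) + sum g {..<Suc j}" .
  have gint: "g k = real_of_int (\<lfloor>2 ^ k * clamp x\<rfloor> * 2 ^ ((j + 3)\<^sup>2 - (k + 3)\<^sup>2))" if "k < Suc j" for k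
  proof -
    have le: "(k + 3)\<^sup>2 \<le> (j + 3)\<^sup>2" using that by (intro power_mono) auto
    have "c = 2 ^ ((j + 3)\<^sup>2 - (k + 3)\<^sup>2) * 2 ^ ((k + 3)\<^sup>2)"
      unfolding c_def using le by (simp flip: power_add)
    then show ?thesis unfolding g_def phiterm_def by simp
  qed
  define I where "I = (\<Sum>k<Suc j. \<lfloor>2 ^ k * clamp x\<rfloor> * 2 ^ ((j + 3)\<^sup>2 - (k + 3)\<^sup>2))"
  have sumI: "sum g {..<Suc j} = real_of_int I" unfolding I_def using gint by simp
  have gt_bound: "g (i + Suc j) \<le> (1/2) ^ (i + 5)" for i
  proof -
    let ?k = "i + Suc j"
    have ex: "?k + (j + 3)\<^sup>2 + (i + 5) \<le> (?k + 3)\<^sup>2"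
      by (simp add: power2_eq_square algebra_simps)
    have "g ?k \<le> c * (2 ^ ?k / 2 ^ ((?k + 3)\<^sup>2))"
      unfolding g_def c_def by (intro mult_left_mono phiterm_le) auto
    also have "\<dots> = 2 ^ (?k + (j + 3)\<^sup>2) / 2 ^ ((?k + 3)\<^sup>2)" unfolding c_def by (simp add: power_add)
    also have "\<dots> \<le> 2 ^ (?k + (j + 3)\<^sup>2) / 2 ^ (?k + (j + 3)\<^sup>2 + (i + 5))"
      using ex by (intro divide_left_mono power_increasing) auto
    also have "\<dots> = (1/2) ^ (i + 5)" by (rule pow_div)
    finally show ?thesis .
  qed
  have g_nonneg: "0 \<le> g k" for k unfolding g_def c_def using phiterm_nonneg by simp
  have gts: "summable (\<lambda>i. g (i + Suc j))" using gs by (rule summable_ignore_initial_segment)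
  have "(\<Sum>i. g (i + Suc j)) \<le> (\<Sum>i. (1/2) ^ (i + 5))"
  proof (intro suminf_le gts gt_bound allI)
    show "summable (\<lambda>i. (1/2::real) ^ (i + 5))"
      using summable_mult2[OF summable_geometric[of "1/2::real"], of "(1/2)^5"] by (simp add: power_add)
  qed
  also have "\<dots> = (1/2)^5 * (\<Sum>i. (1/2::real) ^ i)"
    by (subst suminf_mult[symmetric]) (auto simp: power_add mult_ac)
  also have "\<dots> = 1/16" using suminf_geometric[of "1/2::real"] by (simp add: power_divide)
  finally have r_le: "(\<Sum>i. g (i + Suc j)) \<le> 1/16" .
  have r_ge: "0 \<le> (\<Sum>i. g (i + Suc j))" by (intro suminf_nonneg gts g_nonneg)
  show ?thesis using split sumI r_le r_ge unfolding c_def by (intro exI[of _ I] exI[of _ "\<Sum>i. g (i + Suc j)"]) auto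
qed

lemma cos_near_int:
  assumes "0 \<le> r" "r \<le> 1/16"
  shows "1/2 \<le> cos (2 * pi * (real_of_int I + r))"
proof -
  have "cos (2 * pi * (real_of_int I + r)) = cos (2 * pi * r)"
    by (simp add: distrib_left cos_add mult.assoc[symmetric] sin_int_2pin cos_int_2pin add.commute)
  also have "cos (pi / 3) \<le> cos (2 * pi * r)"
    using assms pi_gt_zero by (intro cos_monotone_0_pi_le) auto
  finally show ?thesis by (simp add: cos_60)
qed




lemma param_int_meas:
  fixes \<nu> :: "real measure" and g :: "real \<Rightarrow> real \<Rightarrow> real"
  assumes P: "prob_space \<nu>" and S: "sets \<nu> = sets borel"
    and g: "case_prod g \<in> borel_measurable (borel \<Otimes>\<^sub>M borel)"
  shows "(\<lambda>t. \<integral>y. g t y \<partial>\<nu>) \<in> borel_measurable borel"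
proof -
  interpret \<nu>: prob_space \<nu> by fact
  have "sets (borel \<Otimes>\<^sub>M \<nu>) = sets (borel \<Otimes>\<^sub>M borel)"
    by (rule sets_pair_measure_cong[OF refl S])
  from measurable_cong_sets[OF this refl, of borel]
  have eq: "borel_measurable (borel \<Otimes>\<^sub>M \<nu>) = borel_measurable (borel \<Otimes>\<^sub>M borel)" .
  have "case_prod g \<in> borel_measurable (borel \<Otimes>\<^sub>M \<nu>)"
    unfolding eq by (rule g)
  then show ?thesis by (rule \<nu>.borel_measurable_lebesgue_integral)
qed

lemma meas_nu:
  fixes \<nu> :: "real measure"
  assumes S: "sets \<nu> = sets borel" and f: "f \<in> borel_measurable borel"
  shows "f \<in> borel_measurable \<nu>"
  using f unfolding measurable_cong_sets[OF S refl] .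

lemma prob_int_abs_le:
  fixes \<nu> :: "real measure" and f :: "real \<Rightarrow> real" and B :: real
  assumes P: "prob_space \<nu>" and S: "sets \<nu> = sets borel" and f: "f \<in> borel_measurable borel"
    and B: "\<And>x. \<bar>f x\<bar> \<le> B"
  shows "\<bar>\<integral>y. f y \<partial>\<nu>\<bar> \<le> B" and "integrable \<nu> f"
proof -
  interpret \<nu>: prob_space \<nu> by fact
  have fm: "f \<in> borel_measurable \<nu>" by (rule meas_nu[OF S f])
  show int: "integrable \<nu> f" by (rule \<nu>.integrable_const_bound[where B=B]) (use B fm in auto)
  have "\<bar>\<integral>y. f y \<partial>\<nu>\<bar> \<le> (\<integral>y. \<bar>f y\<bar> \<partial>\<nu>)"
    using integral_norm_bound[of \<nu> f] by simp
  also have "\<dots> \<le> B"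
    by (rule \<nu>.integral_le_const) (use int B in auto)
  finally show "\<bar>\<integral>y. f y \<partial>\<nu>\<bar> \<le> B" .
qed

lemma set_int_bdd:
  fixes f :: "real \<Rightarrow> real"
  assumes f: "f \<in> borel_measurable borel" and B: "\<And>t. \<bar>f t\<bar> \<le> B"
  shows "set_integrable lborel {0..T} f"
  unfolding set_integrable_def
  by (rule integrableI_bounded_set[where A="{0..T}" and B=B])
     (use f B in \<open>auto simp: emeasure_lborel_Icc_eq indicator_def\<close>)

lemma set_int_sum_lemma:
  fixes h :: "nat \<Rightarrow> real \<Rightarrow> real"
  assumes hint: "\<And>n. set_integrable lborel {0..T} (h n)" and T: "0 \<le> T"
  shows "set_integrable lborel {0..T} (\<lambda>t. (\<Sum>n<N. c n * h n t) + d) \<and>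
    (LBINT t:{0..T}. (\<Sum>n<N. c n * h n t) + d) = (\<Sum>n<N. c n * (LBINT t:{0..T}. h n t)) + d * T"
proof (induction N)
  case 0
  have "set_integrable lborel {0..T} (\<lambda>t. d)"
    by (auto simp: set_integrable_def emeasure_lborel_Icc_eq intro!: disjI2 integrable_real_indicator)
  moreover have "(LBINT t:{0..T}. d) = d * T" using T by (simp add: set_lebesgue_integral_def mult.commute)
  ultimately show ?case by simp
next
  case (Suc N)
  have eq: "(\<lambda>t. (\<Sum>n<Suc N. c n * h n t) + d) = (\<lambda>t. ((\<Sum>n<N. c n * h n t) + d) + c N * h N t)"
    by (simp add: algebra_simps)
  have i2: "set_integrable lborel {0..T} (\<lambda>t. c N * h N t)"
    using hint[of N] by (intro set_integrable_mult_right) auto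
  show ?case unfolding eq
    using Suc.IH i2 set_integral_add[of lborel "{0..T}" "\<lambda>t. (\<Sum>n<N. c n * h n t) + d" "\<lambda>t. c N * h N t"]
    by (simp add: algebra_simps)
qed

lemma H_avg:
  fixes h :: "nat \<Rightarrow> real \<Rightarrow> real"
  assumes hm: "\<And>n. h n \<in> borel_measurable borel" and h0: "\<And>n t. 0 \<le> h n t" and h2: "\<And>n t. h n t \<le> 2"
    and avg: "\<And>n. ((\<lambda>T. (LBINT t:{0..T}. h n t) / T) \<longlongrightarrow> 0) at_top"
  shows "((\<lambda>T. (LBINT t:{0..T}. (\<Sum>n. (1/2)^n * h n t)) / T) \<longlongrightarrow> 0) at_top"
proof -
  define H where "H t = (\<Sum>n. (1/2)^n * h n t)" for t
  have geo: "summable (\<lambda>n. 2 * (1/2::real)^n)" by (intro summable_mult summable_geometric) simp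
  have hs: "summable (\<lambda>n. (1/2)^n * h n t)" for t
    by (rule summable_comparison_test[OF _ geo]) (auto intro!: exI[of _ 0] simp: h0 h2 mult.commute mult_left_mono)
  have Hm: "H \<in> borel_measurable borel" unfolding H_def
    by (intro borel_measurable_suminf borel_measurable_times borel_measurable_const hm)
  have H0: "0 \<le> H t" for t unfolding H_def by (intro suminf_nonneg hs) (simp add: h0)
  have tail: "H t \<le> (\<Sum>n<N. (1/2)^n * h n t) + 4 * (1/2)^N" for t N
  proof -
    have "H t = (\<Sum>n. (1/2)^(n+N) * h (n+N) t) + (\<Sum>n<N. (1/2)^n * h n t)"
      unfolding H_def by (rule suminf_split_initial_segment[OF hs])
    moreover have "(\<Sum>n. (1/2)^(n+N) * h (n+N) t) \<le> (\<Sum>n. (1/2)^N * (2 * (1/2::real)^n))"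
    proof (rule suminf_le)
      show "summable (\<lambda>n. (1/2)^(n+N) * h (n+N) t)" using hs[of t] by (rule summable_ignore_initial_segment)
      show "summable (\<lambda>n. (1/2)^N * (2 * (1/2::real)^n))" by (intro summable_mult geo)
      show "(1/2)^(n+N) * h (n+N) t \<le> (1/2)^N * (2 * (1/2::real)^n)" for n
        using h2[of "n+N" t] by (simp add: power_add mult_left_mono mult_ac)
    qed
    moreover have "(\<Sum>n. (1/2)^N * (2 * (1/2::real)^n)) = 4 * (1/2)^N"
      using suminf_geometric[of "1/2::real"] by (simp add: suminf_mult)
    ultimately show ?thesis by simp
  qed
  have hint: "set_integrable lborel {0..T} (h n)" for n T
    by (rule set_int_bdd[OF hm, where B=2]) (use h0 h2 in \<open>auto simp: abs_le_iff intro: order_trans[OF _ h0]\<close>)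
  have Hint: "set_integrable lborel {0..T} H" for T
    by (rule set_int_bdd[OF Hm, where B=4]) (use H0 tail[of _ 0] in auto)
  show ?thesis
    unfolding H_def[symmetric]
  proof (rule order_tendstoI)
    fix e :: real assume "e < 0"
    show "\<forall>\<^sub>F T in at_top. e < (LBINT t:{0..T}. H t) / T"
      using eventually_ge_at_top[of "0::real"]
    proof eventually_elim
      case (elim T)
      have "0 \<le> (LBINT t:{0..T}. H t)"
        unfolding set_lebesgue_integral_def by (intro Bochner_Integration.integral_nonneg) (auto simp: H0 indicator_def)
      then show ?case using elim \<open>e < 0\<close> by (smt (verit) divide_nonneg_nonneg)
    qed
  next
    fix e :: real assume e: "0 < e"
    obtain N where N: "(1/2::real) ^ N < e / 8" using real_arch_pow_inv[of "e/8" "1/2::real"] e by auto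
    have "((\<lambda>T. \<Sum>n<N. (1/2)^n * ((LBINT t:{0..T}. h n t) / T)) \<longlongrightarrow> (\<Sum>n<N. (1/2)^n * 0)) at_top"
      by (intro tendsto_sum tendsto_mult tendsto_const avg)
    then have "\<forall>\<^sub>F T in at_top. (\<Sum>n<N. (1/2)^n * ((LBINT t:{0..T}. h n t) / T)) < e / 2"
      using e by (intro order_tendstoD(2)) auto
    then show "\<forall>\<^sub>F T in at_top. (LBINT t:{0..T}. H t) / T < e"
      using eventually_gt_at_top[of "0::real"]
    proof eventually_elim
      case (elim T)
      note SL = set_int_sum_lemma[OF hint, where T=T and N=N and c="\<lambda>n. (1/2)^n" and d="4 * (1/2)^N"]
      have "(LBINT t:{0..T}. H t) \<le> (LBINT t:{0..T}. (\<Sum>n<N. (1/2)^n * h n t) + 4 * (1/2)^N)"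
        using Hint SL elim by (intro set_integral_mono tail) auto
      also have "\<dots> = (\<Sum>n<N. (1/2)^n * (LBINT t:{0..T}. h n t)) + 4 * (1/2)^N * T"
        using SL elim by auto
      finally have "(LBINT t:{0..T}. H t) / T \<le> (\<Sum>n<N. (1/2)^n * (LBINT t:{0..T}. h n t)) / T + 4 * (1/2)^N"
        using elim by (simp add: divide_simps)
      also have "(\<Sum>n<N. (1/2)^n * (LBINT t:{0..T}. h n t)) / T = (\<Sum>n<N. (1/2)^n * ((LBINT t:{0..T}. h n t) / T))"
        by (simp add: sum_divide_distrib)
      finally show ?case using elim N by linarith
    qed
  qed
qed

lemma tp_bdd: "tp f \<Longrightarrow> \<exists>B. \<forall>u. \<bar>f u\<bar> \<le> B"
proof (induction rule: tp.induct)
  case (tp_const c) then show ?case by auto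
next
  case (tp_cos n) then show ?case by (auto intro!: exI[of _ 1])
next
  case (tp_sin n) then show ?case by (auto intro!: exI[of _ 1])
next
  case (tp_add f g)
  then obtain B1 B2 where "\<forall>u. \<bar>f u\<bar> \<le> B1" "\<forall>u. \<bar>g u\<bar> \<le> B2" by auto
  then show ?case by (intro exI[of _ "B1 + B2"]) (auto intro: abs_triangle_ineq[THEN order_trans] add_mono)
next
  case (tp_scale f c)
  then obtain B where "\<forall>u. \<bar>f u\<bar> \<le> B" by auto
  then show ?case by (intro exI[of _ "\<bar>c\<bar> * B"]) (auto simp: abs_mult intro: mult_left_mono)
qed

definition bc :: "(real \<Rightarrow> real) \<Rightarrow> bool" where
  "bc f \<longleftrightarrow> continuous_on UNIV f \<and> (\<exists>B. \<forall>u. \<bar>f u\<bar> \<le> B)"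

lemma tp_bc: "tp f \<Longrightarrow> bc f" by (simp add: bc_def tp_cont tp_bdd)

lemma circle_bc:
  assumes f: "circle_fun f" shows "bc f"
proof -
  have fc: "continuous_on UNIV f" using f by (simp add: circle_fun_def)
  have "compact (f ` {0..1})"
    by (rule compact_continuous_image[OF continuous_on_subset[OF fc]]) auto
  then have "bounded (f ` {0..1})" by (rule compact_imp_bounded)
  then obtain B where "\<forall>x\<in>f ` {0..1}. norm x \<le> B" by (auto simp: bounded_iff)
  then have B: "\<And>x. x \<in> {0..1} \<Longrightarrow> \<bar>f x\<bar> \<le> B" by auto
  have "\<bar>f u\<bar> \<le> B" for u
  proof -
    have "f u = f ((u - real_of_int \<lfloor>u\<rfloor>) + real_of_int \<lfloor>u\<rfloor>)" by simp
    also have "\<dots> = f (u - real_of_int \<lfloor>u\<rfloor>)" by (rule circle_fun_int[OF f])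
    moreover have "u - real_of_int \<lfloor>u\<rfloor> \<in> {0..1}"
      using frac_ge_0[of u] frac_lt_1[of u] by (simp add: frac_def)
    ultimately show ?thesis using B[of "u - real_of_int \<lfloor>u\<rfloor>"] by simp
  qed
  then show ?thesis using fc by (auto simp: bc_def)
qed

lemma bc_meas: "bc f \<Longrightarrow> f \<in> borel_measurable borel"
  by (simp add: bc_def borel_measurable_continuous_onI)


context
  fixes \<nu> :: "real measure" and x0 :: real
  assumes P: "prob_space \<nu>" and S: "sets \<nu> = sets borel"
begin

lemma mu_integrable: "bc f \<Longrightarrow> integrable \<nu> (\<lambda>y. f (t * y + x0))"
proof -
  assume f: "bc f"
  then obtain B where B: "\<And>u. \<bar>f u\<bar> \<le> B" by (auto simp: bc_def)
  have [measurable]: "f \<in> borel_measurable borel" using f by (rule bc_meas)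
  show ?thesis by (rule prob_int_abs_le(2)[OF P S, where B=B]) (auto simp: B)
qed

lemma mu_bound:
  assumes f: "bc f" and g: "bc g" and e: "\<And>u. \<bar>f u - g u\<bar> \<le> e"
  shows "\<bar>mu_int \<nu> x0 t f - mu_int \<nu> x0 t g\<bar> \<le> e"
proof -
  have [measurable]: "f \<in> borel_measurable borel" "g \<in> borel_measurable borel" using f g by (auto intro: bc_meas)
  have "mu_int \<nu> x0 t f - mu_int \<nu> x0 t g = (\<integral>y. f (t * y + x0) - g (t * y + x0) \<partial>\<nu>)"
    unfolding mu_int_def using mu_integrable[OF f] mu_integrable[OF g] by simp
  also have "\<bar>\<dots>\<bar> \<le> e"
    by (rule prob_int_abs_le(1)[OF P S, where f="\<lambda>y. f (t * y + x0) - g (t * y + x0)"]) (measurable, rule e)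
  finally show ?thesis .
qed

lemma haar_bound:
  assumes f: "bc f" and g: "bc g" and e: "\<And>u. \<bar>f u - g u\<bar> \<le> e"
  shows "\<bar>haar_int f - haar_int g\<bar> \<le> e"
proof -
  have "set_integrable lborel {0..1} f" "set_integrable lborel {0..1} g"
    using f g unfolding bc_def by (meson borel_integrable_atLeastAtMost' continuous_on_subset subset_UNIV)+
  then have "haar_int f - haar_int g = (LBINT x:{0..1}. f x - g x)"
    unfolding haar_int_def by (simp add: set_integral_diff)
  also have "\<bar>\<dots>\<bar> \<le> e"
  proof -
    have ci: "set_integrable lborel {0..1::real} (\<lambda>x. c)" for c :: real
      by (auto simp: set_integrable_def emeasure_lborel_Icc_eq intro!: disjI2 integrable_real_indicator)
    have cv: "(LBINT x:{0..1::real}. c) = c" for c :: real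
      by (simp add: set_lebesgue_integral_def)
    have di: "set_integrable lborel {0..1} (\<lambda>x. f x - g x)"
      using \<open>set_integrable lborel {0..1} f\<close> \<open>set_integrable lborel {0..1} g\<close> by (rule set_integral_diff)
    have "(LBINT x:{0..1}. f x - g x) \<le> (LBINT x:{0..1::real}. e)"
      by (rule set_integral_mono[OF di ci[of e]]) (use e in \<open>simp add: abs_le_iff\<close>)
    moreover have "(LBINT x:{0..1::real}. -e) \<le> (LBINT x:{0..1}. f x - g x)"
    proof (rule set_integral_mono[OF ci[of "-e"] di])
      fix x show "-e \<le> f x - g x" using abs_le_D2[OF e[of x]] by linarith
    qed
    ultimately show ?thesis using cv[of e] cv[of "-e"] by linarith
  qed
  finally show ?thesis .
qed

lemma mu_const: "mu_int \<nu> x0 t (\<lambda>u. c) = c"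
proof -
  interpret prob_space \<nu> by (rule P)
  show ?thesis unfolding mu_int_def by (simp add: prob_space)
qed

lemma mu_add: "bc f \<Longrightarrow> bc g \<Longrightarrow> mu_int \<nu> x0 t (\<lambda>u. f u + g u) = mu_int \<nu> x0 t f + mu_int \<nu> x0 t g"
  unfolding mu_int_def by (intro Bochner_Integration.integral_add mu_integrable)

lemma mu_scale: "mu_int \<nu> x0 t (\<lambda>u. c * f u) = c * mu_int \<nu> x0 t f"
  unfolding mu_int_def by simp

lemma mu_cos: "mu_int \<nu> x0 t (\<lambda>u. cos (b * u)) =
   cos (b * x0) * (\<integral>y. cos (b * t * y) \<partial>\<nu>) - sin (b * x0) * (\<integral>y. sin (b * t * y) \<partial>\<nu>)"
proof -
  have ic: "integrable \<nu> (\<lambda>y. cos (b * t * y))" and iS: "integrable \<nu> (\<lambda>y. sin (b * t * y))"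
    by (rule prob_int_abs_le(2)[OF P S, where B=1]; simp)+
  have "mu_int \<nu> x0 t (\<lambda>u. cos (b * u)) = (\<integral>y. cos (b * x0) * cos (b * t * y) - sin (b * x0) * sin (b * t * y) \<partial>\<nu>)"
    unfolding mu_int_def by (intro Bochner_Integration.integral_cong refl) (simp add: cos_add distrib_left mult_ac)
  also have "\<dots> = cos (b * x0) * (\<integral>y. cos (b * t * y) \<partial>\<nu>) - sin (b * x0) * (\<integral>y. sin (b * t * y) \<partial>\<nu>)"
    using ic iS by simp
  finally show ?thesis .
qed

lemma mu_sin: "mu_int \<nu> x0 t (\<lambda>u. sin (b * u)) =
   sin (b * x0) * (\<integral>y. cos (b * t * y) \<partial>\<nu>) + cos (b * x0) * (\<integral>y. sin (b * t * y) \<partial>\<nu>)"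
proof -
  have ic: "integrable \<nu> (\<lambda>y. cos (b * t * y))" and iS: "integrable \<nu> (\<lambda>y. sin (b * t * y))"
    by (rule prob_int_abs_le(2)[OF P S, where B=1]; simp)+
  have "mu_int \<nu> x0 t (\<lambda>u. sin (b * u)) = (\<integral>y. sin (b * x0) * cos (b * t * y) + cos (b * x0) * sin (b * t * y) \<partial>\<nu>)"
    unfolding mu_int_def by (intro Bochner_Integration.integral_cong refl) (simp add: sin_add distrib_left mult_ac)
  also have "\<dots> = sin (b * x0) * (\<integral>y. cos (b * t * y) \<partial>\<nu>) + cos (b * x0) * (\<integral>y. sin (b * t * y) \<partial>\<nu>)"
    using ic iS by simp
  finally show ?thesis .
qed

end

lemma haar_const: "haar_int (\<lambda>u. c) = c"
  unfolding haar_int_def by (simp add: set_lebesgue_integral_def)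

lemma haar_add: "bc f \<Longrightarrow> bc g \<Longrightarrow> haar_int (\<lambda>u. f u + g u) = haar_int f + haar_int g"
proof -
  assume f: "bc f" and g: "bc g"
  have "set_integrable lborel {0..1} f" "set_integrable lborel {0..1} g"
    using f g unfolding bc_def by (meson borel_integrable_atLeastAtMost' continuous_on_subset subset_UNIV)+
  then show ?thesis unfolding haar_int_def by (rule set_integral_add(2))
qed

lemma haar_scale: "haar_int (\<lambda>u. c * f u) = c * haar_int f"
  unfolding haar_int_def by simp

lemma haar_cos: "b \<noteq> 0 \<Longrightarrow> sin b = 0 \<Longrightarrow> haar_int (\<lambda>u. cos (b * u)) = 0"
  unfolding haar_int_def using cos_int_0T[of 1 b] by simp

lemma sin_int_01:
  fixes b :: real assumes "b \<noteq> 0"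
  shows "(LBINT t:{0..1}. sin (b * t)) = (cos (b * 0) - cos (b * 1)) / b"
proof -
  have eq: "(LBINT t:{0..1}. sin (b*t)) = (LBINT t=ereal 0..ereal 1. sin (b*t))"
    by (rule interval_integral_Icc[symmetric]) simp
  have "(LBINT t=ereal 0..ereal 1. sin (b * t)) = (- cos (b * 1) / b) - (- cos (b * 0) / b)"
    using assms
    by (intro interval_integral_FTC_finite continuous_intros)
       (auto intro!: derivative_eq_intros simp: has_real_derivative_iff_has_vector_derivative[symmetric])
  then show ?thesis using eq by (simp add: diff_divide_distrib)
qed

lemma haar_sin: "b \<noteq> 0 \<Longrightarrow> cos b = 1 \<Longrightarrow> haar_int (\<lambda>u. sin (b * u)) = 0"
  unfolding haar_int_def using sin_int_01[of b] by simp

lemma weak_general: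
  fixes \<nu> :: "real measure" and x0 :: real
  assumes P: "prob_space \<nu>" and S: "sets \<nu> = sets borel" and atom: "\<And>y. measure \<nu> {y} = 0"
  shows "weakly_equidistributed \<nu> x0"
proof -
  interpret \<nu>: prob_space \<nu> by (rule P)
  define a where "a n = 2 * pi * real (Suc n)" for n
  define h where "h n t = (\<integral>y. cos (a n * t * y) \<partial>\<nu>)\<^sup>2 + (\<integral>y. sin (a n * t * y) \<partial>\<nu>)\<^sup>2" for n t
  have cb: "\<bar>\<integral>y. cos (c * y) \<partial>\<nu>\<bar> \<le> 1" for c
    by (rule prob_int_abs_le(1)[OF P S]) (rule borel_measurable_continuous_onI, intro continuous_intros, simp)
  have sb: "\<bar>\<integral>y. sin (c * y) \<partial>\<nu>\<bar> \<le> 1" for c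
    by (rule prob_int_abs_le(1)[OF P S]) (rule borel_measurable_continuous_onI, intro continuous_intros, simp)
  have h0: "0 \<le> h n t" for n t unfolding h_def by simp
  have h2: "h n t \<le> 2" for n t
  proof -
    have "(\<integral>y. cos (a n * t * y) \<partial>\<nu>)\<^sup>2 \<le> 1" using cb[of "a n * t"] by (simp add: abs_square_le_1)
    moreover have "(\<integral>y. sin (a n * t * y) \<partial>\<nu>)\<^sup>2 \<le> 1" using sb[of "a n * t"] by (simp add: abs_square_le_1)
    ultimately show ?thesis unfolding h_def by simp
  qed
  have hm: "h n \<in> borel_measurable borel" for n
  proof -
    have [measurable]: "(\<lambda>t. \<integral>y. cos (a n * t * y) \<partial>\<nu>) \<in> borel_measurable borel"
      by (rule param_int_meas[OF P S]) measurable
    have [measurable]: "(\<lambda>t. \<integral>y. sin (a n * t * y) \<partial>\<nu>) \<in> borel_measurable borel"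
      by (rule param_int_meas[OF P S]) measurable
    show ?thesis unfolding h_def[abs_def] by measurable
  qed
  have a0: "a n \<noteq> 0" for n unfolding a_def by simp
  have havg: "((\<lambda>T. (LBINT t:{0..T}. h n t) / T) \<longlongrightarrow> 0) at_top" for n
    unfolding h_def using wiener[OF P S atom a0[of n]] .
  define H where "H t = (\<Sum>n. (1/2)^n * h n t)" for t
  have Havg: "((\<lambda>T. (LBINT t:{0..T}. H t) / T) \<longlongrightarrow> 0) at_top"
    unfolding H_def using H_avg[OF hm h0 h2 havg] .
  have geo: "summable (\<lambda>n. 2 * (1/2::real)^n)" by (intro summable_mult summable_geometric) simp
  have hs: "summable (\<lambda>n. (1/2)^n * h n t)" for t
    by (rule summable_comparison_test[OF _ geo]) (auto intro!: exI[of _ 0] simp: h0 h2 mult.commute mult_left_mono)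
  have Hm: "H \<in> borel_measurable borel" unfolding H_def
    by (intro borel_measurable_suminf borel_measurable_times borel_measurable_const hm)
  have H0: "0 \<le> H t" for t unfolding H_def by (intro suminf_nonneg hs) (simp add: h0)
  have H4: "H t \<le> 4" for t
  proof -
    have "H t \<le> (\<Sum>n. 2 * (1/2::real)^n)" unfolding H_def
      by (intro suminf_le hs geo allI) (simp add: h2 mult.commute mult_left_mono)
    also have "\<dots> = 4" using suminf_geometric[of "1/2::real"] by (simp add: suminf_mult)
    finally show ?thesis .
  qed
  have hH: "h n t \<le> 2 ^ n * H t" for n t
  proof -
    have "sum (\<lambda>n. (1/2)^n * h n t) {n} \<le> H t"
      unfolding H_def by (rule sum_le_suminf[OF hs]) (auto simp: h0)
    then have "(1/2)^n * h n t \<le> H t" by simp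
    then have "2^n * ((1/2)^n * h n t) \<le> 2^n * H t" by (intro mult_left_mono) auto
    then show ?thesis by (simp add: power_one_over)
  qed
  obtain A where A: "A \<subseteq> {0..}" "A \<in> sets borel"
    "((\<lambda>T. measure lborel (A \<inter> {0..T}) / T) \<longlongrightarrow> 1) at_top"
    "(H \<longlongrightarrow> 0) (inf at_top (principal A))"
    using density_set[OF Hm H0 H4 Havg] by blast
  define F where "F = inf at_top (principal A)"
  have hF: "(h n \<longlongrightarrow> 0) F" for n
  proof (rule tendsto_sandwich[where f="\<lambda>_. 0" and h="\<lambda>t. 2 ^ n * H t"])
    show "\<forall>\<^sub>F t in F. 0 \<le> h n t" by (simp add: h0)
    show "\<forall>\<^sub>F t in F. h n t \<le> 2 ^ n * H t" by (simp add: hH)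
    show "((\<lambda>t. 2 ^ n * H t) \<longlongrightarrow> 0) F"
      using tendsto_mult_right_zero[OF A(4), of "2^n"] unfolding F_def by simp
  qed simp
  have sq_lim: "(g \<longlongrightarrow> 0) F" if "(k \<longlongrightarrow> 0) F" "\<And>t. (g t)\<^sup>2 \<le> k t" for g k :: "real \<Rightarrow> real"
  proof -
    have "((\<lambda>t. sqrt (k t)) \<longlongrightarrow> sqrt 0) F" by (intro tendsto_real_sqrt that)
    then have sk: "((\<lambda>t. sqrt (k t)) \<longlongrightarrow> 0) F" by simp
    have ab: "\<bar>g t\<bar> \<le> sqrt (k t)" for t
      using real_sqrt_le_mono[OF that(2)[of t]] by simp
    show ?thesis
    proof (rule tendsto_sandwich[where f="\<lambda>t. - sqrt (k t)" and h="\<lambda>t. sqrt (k t)"])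
      have "- sqrt (k t) \<le> g t" for t using ab[of t] by linarith
      then show "\<forall>\<^sub>F t in F. - sqrt (k t) \<le> g t" by simp
      have "g t \<le> sqrt (k t)" for t using ab[of t] by linarith
      then show "\<forall>\<^sub>F t in F. g t \<le> sqrt (k t)" by simp
      show "((\<lambda>t. - sqrt (k t)) \<longlongrightarrow> 0) F" using tendsto_minus[OF sk] by simp
    qed (rule sk)
  qed
  have cF: "((\<lambda>t. \<integral>y. cos (a n * t * y) \<partial>\<nu>) \<longlongrightarrow> 0) F" for n
    by (rule sq_lim[OF hF[of n]]) (simp add: h_def)
  have sF: "((\<lambda>t. \<integral>y. sin (a n * t * y) \<partial>\<nu>) \<longlongrightarrow> 0) F" for n
    by (rule sq_lim[OF hF[of n]]) (simp add: h_def)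
  have kF: "((\<lambda>t. \<integral>y. cos (2 * pi * real_of_int k * t * y) \<partial>\<nu>) \<longlongrightarrow> 0) F \<and>
            ((\<lambda>t. \<integral>y. sin (2 * pi * real_of_int k * t * y) \<partial>\<nu>) \<longlongrightarrow> 0) F" if k: "k \<noteq> 0" for k
  proof (cases "k > 0")
    case True
    define n where "n = nat k - 1"
    have "2 * pi * real_of_int k = a n" unfolding a_def n_def using True by simp
    then show ?thesis using cF[of n] sF[of n] by simp
  next
    case False
    define n where "n = nat (- k) - 1"
    have "2 * pi * real_of_int k = - a n" unfolding a_def n_def using False k by simp
    then show ?thesis using cF[of n] tendsto_minus[OF sF[of n]] by simp
  qed
  have good: "((\<lambda>t. mu_int \<nu> x0 t g) \<longlongrightarrow> haar_int g) F" if "tp g" for g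
    using that
  proof induction
    case (tp_const c)
    show ?case by (simp add: mu_const[OF P S] haar_const)
  next
    case (tp_cos k)
    show ?case
    proof (cases "k = 0")
      case True then show ?thesis by (simp add: mu_const[OF P S] haar_const)
    next
      case False
      let ?b = "2 * pi * real_of_int k"
      have "((\<lambda>t. cos (?b * x0) * (\<integral>y. cos (?b * t * y) \<partial>\<nu>) - sin (?b * x0) * (\<integral>y. sin (?b * t * y) \<partial>\<nu>))
          \<longlongrightarrow> cos (?b * x0) * 0 - sin (?b * x0) * 0) F"
        using kF[OF False] by (intro tendsto_intros) auto
      moreover have "haar_int (\<lambda>u. cos (?b * u)) = 0"
        using False by (intro haar_cos) (auto simp: sin_int_2pin)
      ultimately show ?thesis by (simp add: mu_cos[OF P S])
    qed
  next
    case (tp_sin k)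
    show ?case
    proof (cases "k = 0")
      case True then show ?thesis by (simp add: mu_const[OF P S] haar_const)
    next
      case False
      let ?b = "2 * pi * real_of_int k"
      have "((\<lambda>t. sin (?b * x0) * (\<integral>y. cos (?b * t * y) \<partial>\<nu>) + cos (?b * x0) * (\<integral>y. sin (?b * t * y) \<partial>\<nu>))
          \<longlongrightarrow> sin (?b * x0) * 0 + cos (?b * x0) * 0) F"
        using kF[OF False] by (intro tendsto_intros) auto
      moreover have "haar_int (\<lambda>u. sin (?b * u)) = 0"
        using False by (intro haar_sin) (auto simp: cos_int_2pin)
      ultimately show ?thesis by (simp add: mu_sin[OF P S])
    qed
  next
    case (tp_add f g)
    then show ?case
      by (simp add: mu_add[OF P S] haar_add tp_bc tendsto_add)
  next
    case (tp_scale f c)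
    then show ?case by (simp add: mu_scale[OF P S] haar_scale tendsto_mult_left)
  qed
  have allf: "((\<lambda>t. mu_int \<nu> x0 t f) \<longlongrightarrow> haar_int f) F" if f: "circle_fun f" for f
  proof (rule tendstoI)
    fix e :: real assume e: "0 < e"
    obtain g where g: "tp g" "\<And>u. \<bar>f u - g u\<bar> < e / 3"
      using circle_approx[OF f, of "e/3"] e by auto
    have bf: "bc f" by (rule circle_bc[OF f])
    have bg: "bc g" by (rule tp_bc[OF g(1)])
    have le: "\<bar>f u - g u\<bar> \<le> e / 3" for u using g(2)[of u] by simp
    have "\<forall>\<^sub>F t in F. dist (mu_int \<nu> x0 t g) (haar_int g) < e / 3"
      using tendstoD[OF good[OF g(1)], of "e/3"] e by simp
    then show "\<forall>\<^sub>F t in F. dist (mu_int \<nu> x0 t f) (haar_int f) < e"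
    proof eventually_elim
      case (elim t)
      have "\<bar>mu_int \<nu> x0 t f - mu_int \<nu> x0 t g\<bar> \<le> e / 3" by (rule mu_bound[OF P S bf bg le])
      moreover have "\<bar>haar_int f - haar_int g\<bar> \<le> e / 3" by (rule haar_bound[OF P S bf bg le])
      ultimately show ?case using elim unfolding dist_real_def by linarith
    qed
  qed
  show ?thesis
    unfolding weakly_equidistributed_def
  proof (intro exI[of _ A] conjI allI impI)
    show "A \<subseteq> {0..}" by (rule A(1))
    show "A \<in> sets lebesgue" using A(2) by (simp add: sets_completionI_sets)
    have "measure lebesgue (A \<inter> {0..T}) = measure lborel (A \<inter> {0..T})" for T
      using A(2) by (intro measure_completion) auto
    then show "((\<lambda>T. measure lebesgue (A \<inter> {0..T}) / T) \<longlongrightarrow> 1) at_top"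
      using A(3) by simp
    show "((\<lambda>t. mu_int \<nu> x0 t f) \<longlongrightarrow> haar_int f) (inf at_top (principal A))" if "circle_fun f" for f
      using allf[OF that] unfolding F_def .
  qed
qed

definition Unif :: "real measure" where "Unif = uniform_measure lborel {0..1}"
definition nu0 :: "real measure" where "nu0 = distr Unif borel phi"

lemma Unif_prob: "prob_space Unif"
  unfolding Unif_def by (rule prob_space_uniform_measure) (auto simp: emeasure_lborel_Icc_eq)

lemma Unif_sets: "sets Unif = sets borel" unfolding Unif_def by simp

lemma Unif_space: "space Unif = UNIV" unfolding Unif_def by simp

lemma phi_meas_U: "phi \<in> measurable Unif borel"
  using phi_meas unfolding measurable_cong_sets[OF Unif_sets refl] .

lemma nu0_prob: "prob_space nu0"
  unfolding nu0_def by (rule prob_space.prob_space_distr[OF Unif_prob phi_meas_U])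

lemma nu0_sets: "sets nu0 = sets borel" unfolding nu0_def by simp

lemma nu0_atom: "measure nu0 {y} = 0"
proof -
  let ?X = "phi -` {y} \<inter> space Unif"
  have X: "?X \<in> sets borel" using measurable_sets[OF phi_meas, of "{y}"] by (simp add: Unif_space)
  have sub: "?X \<inter> {0..1} \<subseteq> {x}" if "x \<in> ?X \<inter> {0..1}" for x
  proof
    fix z assume z: "z \<in> ?X \<inter> {0..1}"
    show "z \<in> {x}"
    proof (rule ccontr)
      assume "z \<notin> {x}"
      then have "z < x \<or> x < z" by auto
      then show False
        using phi_strict[of z x] phi_strict[of x z] that z by auto
    qed
  qed
  have "countable (?X \<inter> {0..1})"
  proof (cases "?X \<inter> {0..1} = {}")
    case False
    then obtain x where "x \<in> ?X \<inter> {0..1}" by blast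
    from sub[OF this] show ?thesis by (rule countable_subset) simp
  qed simp
  from countable_imp_null_set_lborel[OF this]
  have "emeasure lborel (?X \<inter> {0..1}) = 0" by (rule null_setsD1)
  then have null: "emeasure lborel ({0..1} \<inter> ?X) = 0" by (simp add: Int_commute)
  have "measure nu0 {y} = measure Unif ?X"
    unfolding nu0_def by (rule measure_distr[OF phi_meas_U]) simp
  also have "\<dots> = 0"
  proof -
    have X': "phi -` {y} \<in> sets borel" using X by (simp add: Unif_space)
    have null': "emeasure lborel ({0..1} \<inter> phi -` {y}) = 0" using null by (simp add: Unif_space)
    have "emeasure Unif (phi -` {y}) = 0" unfolding Unif_def using X' null' by simp
    then show ?thesis by (simp add: measure_def Unif_space)
  qed
  finally show ?thesis .
qed

lemma haar_shift_cos: "haar_int (\<lambda>u. cos (2 * pi * (u - x0))) = 0"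
proof -
  have eq: "(LBINT u:{0..1}. cos (2 * pi * (u - x0))) = (LBINT u=ereal 0..ereal 1. cos (2 * pi * (u - x0)))"
    by (rule interval_integral_Icc[symmetric]) simp
  have "(LBINT u=ereal 0..ereal 1. cos (2 * pi * (u - x0))) = sin (2 * pi * (1 - x0)) / (2 * pi) - sin (2 * pi * (0 - x0)) / (2 * pi)"
    by (intro interval_integral_FTC_finite continuous_intros)
       (auto intro!: derivative_eq_intros simp: has_real_derivative_iff_has_vector_derivative[symmetric])
  moreover have "sin (2 * pi * (1 - x0)) = sin (2 * pi * (0 - x0))"
  proof -
    have "2 * pi * (1 - x0) = 2 * pi * (0 - x0) + 2 * pi" by (simp add: algebra_simps)
    then show ?thesis by simp
  qed
  ultimately show ?thesis unfolding haar_int_def using eq by simp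
qed

lemma not_equi_nu0: "\<not> equidistributed nu0 x0"
proof
  assume eq: "equidistributed nu0 x0"
  define f where "f u = cos (2 * pi * (u - x0))" for u
  have cf: "circle_fun f"
  proof -
    have "f (u + 1) = f u" for u
    proof -
      have "2 * pi * (u + 1 - x0) = 2 * pi * (u - x0) + 2 * pi" by (simp add: algebra_simps)
      then show ?thesis unfolding f_def by simp
    qed
    moreover have "continuous_on UNIV f" unfolding f_def by (intro continuous_intros)
    ultimately show ?thesis by (simp add: circle_fun_def)
  qed
  have "((\<lambda>t. mu_int nu0 x0 t f) \<longlongrightarrow> haar_int f) at_top"
    using eq cf unfolding equidistributed_def by blast
  moreover have "haar_int f = 0" unfolding f_def by (rule haar_shift_cos)
  ultimately have lim: "((\<lambda>t. mu_int nu0 x0 t f) \<longlongrightarrow> 0) at_top" by simp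
  define tj where "tj j = (2::real) ^ ((j + 3)\<^sup>2)" for j :: nat
  have tj_lim: "filterlim tj at_top sequentially"
  proof (rule filterlim_at_top_mono[OF filterlim_real_sequentially])
    show "\<forall>\<^sub>F j in sequentially. real j \<le> tj j"
    proof (intro always_eventually allI)
      fix j :: nat
      have "real j \<le> 2 ^ j" using of_nat_less_two_power[of j, where 'a=real] by simp
      also have "(2::real) ^ j \<le> 2 ^ ((j + 3)\<^sup>2)" proof (intro power_increasing)
        have "j \<le> j + 3" by simp
        also have "\<dots> \<le> (j + 3) * (j + 3)" by (rule le_square)
        finally show "j \<le> (j + 3)\<^sup>2" by (simp add: power2_eq_square)
      qed simp
      finally show "real j \<le> tj j" unfolding tj_def .
    qed
  qed
  have seq: "(\<lambda>j. mu_int nu0 x0 (tj j) f) \<longlonglongrightarrow> 0"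
    by (rule filterlim_compose[OF lim tj_lim])
  have ge: "1/2 \<le> mu_int nu0 x0 (tj j) f" for j
  proof -
    interpret U: prob_space Unif by (rule Unif_prob)
    have "mu_int nu0 x0 (tj j) f = (\<integral>y. cos (2 * pi * (tj j * y)) \<partial>nu0)"
      unfolding mu_int_def f_def by simp
    also have "\<dots> = (\<integral>x. cos (2 * pi * (tj j * phi x)) \<partial>Unif)"
      unfolding nu0_def by (rule integral_distr[OF phi_meas_U]) measurable
    also have "1/2 \<le> \<dots>"
    proof (rule U.integral_ge_const)
      show "integrable Unif (\<lambda>x. cos (2 * pi * (tj j * phi x)))"
        by (rule U.integrable_const_bound[where B=1]) (use phi_meas_U in auto)
      show "AE x in Unif. 1/2 \<le> cos (2 * pi * (tj j * phi x))"
        unfolding Unif_def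
      proof (rule AE_uniform_measureI)
        show "AE x\<in>{0..1} in lborel. 1/2 \<le> cos (2 * pi * (tj j * phi x))"
        proof (intro AE_I2 impI)
          fix x :: real assume x: "x \<in> {0..1}"
          obtain I r where "tj j * phi x = real_of_int I + r" "0 \<le> r" "r \<le> 1/16"
            using phi_near_int[OF x, of j] unfolding tj_def by blast
          then show "1/2 \<le> cos (2 * pi * (tj j * phi x))" using cos_near_int by simp
        qed
      qed simp
    qed
    finally show ?thesis .
  qed
  have "1/2 \<le> (0::real)"
    by (rule tendsto_lowerbound[OF seq]) (use ge in auto)
  then show False by simp
qed


theorem proposition5p1:
  fixes x0 :: real
  shows "\<exists>\<nu>. prob_space \<nu> \<and> sets \<nu> = sets borel \<and>
           weakly_equidistributed \<nu> x0 \<and> \<not> equidistributed \<nu> x0"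
  by (intro exI[of _ nu0] conjI nu0_prob nu0_sets weak_general[OF nu0_prob nu0_sets nu0_atom] not_equi_nu0)

end
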